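(* Let $p>1$ and $r,s\in(0,1)$. Then (1) $\arcsin_p(rs)\le\sqrt{\arcsin_p(r^2)\arcsin_p(s^2)}\le\arcsin_p(r)\arcsin_p(s)$; (2) $\operatorname{artanh}_p(rs)\le\sqrt{\operatorname{artanh}_p(r^2)\operatorname{artanh}_p(s^2)}\le\operatorname{artanh}_p(r)\operatorname{artanh}_p(s)$; (3) $\operatorname{arsinh}_p(r)\operatorname{arsinh}_p(s)\le\sqrt{\operatorname{arsinh}_p(r^2)\operatorname{arsinh}_p(s^2)}\le\operatorname{arsinh}_p(rs)$; (4) $\arctan_p(r)\arctan_p(s)\le\sqrt{\arctan_p(r^2)\arctan_p(s^2)}\le\arctan_p(rs)$.
   Context: For $p>1$ and $y\in(0,1)$: $\arcsin_p y=\int_0^y(1-t^p)^{-1/p}dt$, $\arctan_p y=\int_0^y(1+t^p)^{-1}dt$, $\operatorname{arsinh}_p y=\int_0^y(1+t^p)^{-1/p}dt$, $\operatorname{artanh}_p y=\int_0^y(1-t^p)^{-1}dt$. *)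

theory Defs
  imports "HOL-Analysis.Analysis"
begin

definition arcsin_p :: "real \<Rightarrow> real \<Rightarrow> real" where
  "arcsin_p p y = integral {0..y} (\<lambda>t. (1 - t powr p) powr (-1/p))"

definition arctan_p :: "real \<Rightarrow> real \<Rightarrow> real" where
  "arctan_p p y = integral {0..y} (\<lambda>t. 1 / (1 + t powr p))"

definition arsinh_p :: "real \<Rightarrow> real \<Rightarrow> real" where
  "arsinh_p p y = integral {0..y} (\<lambda>t. (1 + t powr p) powr (-1/p))"

definition artanh_p :: "real \<Rightarrow> real \<Rightarrow> real" where
  "artanh_p p y = integral {0..y} (\<lambda>t. 1 / (1 - t powr p))"

end

theory Submission
  imports Defs
begin


locale pfun =
  fixes f :: "real \<Rightarrow> real"
  assumes cont: "continuous_on {0..<1} f"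
    and pos: "\<And>t. 0 \<le> t \<Longrightarrow> t < 1 \<Longrightarrow> f t > 0"
begin

definition F where "F x = integral {0..x} f"
definition h where "h x = integral {0..1} (\<lambda>t. f (x*t))"

lemma cont_sub: "0 \<le> c \<Longrightarrow> c < 1 \<Longrightarrow> continuous_on {0..c} f"
  by (rule continuous_on_subset[OF cont]) auto

lemma cont_h: assumes "0 \<le> x" "x < 1" shows "continuous_on {0..1} (\<lambda>t. f (x*t))"
proof -
  have "continuous_on {0..1} ((\<lambda>t. f t) \<circ> (\<lambda>t. x*t))"
  proof (rule continuous_on_compose)
    show "continuous_on {0..1} ((*) x)" by (intro continuous_intros)
    have "(*) x ` {0..1} \<subseteq> {0..<1}" using assms
      by (auto intro!: le_less_trans[OF mult_left_le])
    then show "continuous_on ((*) x ` {0..1}) f" using cont continuous_on_subset by blast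
  qed
  then show ?thesis by (simp add: o_def)
qed

lemma int_h: "0 \<le> x \<Longrightarrow> x < 1 \<Longrightarrow> (\<lambda>t. f (x*t)) integrable_on {0..1}"
  using cont_h integrable_continuous_real by blast

lemma F_eq: assumes "0 < x" "x < 1" shows "F x = x * h x"
proof -
  have "(\<lambda>t. t / x) ` {0..x} = {0..1}" using assms
    by (auto simp: image_iff field_simps intro!: bexI[where x="_ * x"])
  with integral_stretch_real[of x 0 x f] assms show ?thesis
    by (simp add: F_def h_def)
qed

lemma F_deriv: assumes "0 < x" "x < 1" shows "(F has_real_derivative f x) (at x)"
proof -
  define c where "c = (x+1)/2"
  have c: "0 \<le> c" "c < 1" "x < c" using assms by (auto simp: c_def)
  have "(F has_real_derivative f x) (at x within {0..c})"
    unfolding F_def using integral_has_real_derivative[OF cont_sub[OF c(1,2)]] c assms by auto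
  then have "(F has_real_derivative f x) (at x within {0<..<c})"
    by (rule has_field_derivative_subset) auto
  then show ?thesis using at_within_open[of x "{0<..<c}"] c assms by auto
qed

lemma mt: "(0::real) \<le> x \<Longrightarrow> x < 1 \<Longrightarrow> 0 \<le> t \<Longrightarrow> t \<le> 1 \<Longrightarrow> 0 \<le> x*t \<and> x*t < 1"
  using mult_left_le[of t x] by auto

lemma int_hc: "0 \<le> x \<Longrightarrow> x < 1 \<Longrightarrow> (\<lambda>t. c * f (x*t)) integrable_on {0..1}"
  using integrable_cmul[OF int_h, of x c] by simp

definition G where "G u = ln (F (exp u))"

lemma G_deriv: assumes Fpos: "\<And>x. 0<x \<Longrightarrow> x<1 \<Longrightarrow> F x > 0" and u: "u < 0"
  shows "(G has_real_derivative f (exp u) / h (exp u)) (at u)"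
proof -
  have e: "0 < exp u" "exp u < 1" using u by auto
  have d1: "((\<lambda>u. F(exp u)) has_real_derivative f(exp u) * exp u) (at u)"
    by (rule DERIV_chain2[OF F_deriv[OF e] DERIV_exp])
  have d2: "((\<lambda>u. ln (F(exp u))) has_real_derivative 1 / F (exp u) * (f(exp u) * exp u)) (at u)"
    by (rule DERIV_chain2[OF DERIV_ln_divide[OF Fpos[OF e]] d1])
  have "1 / F (exp u) * (f(exp u) * exp u) = f (exp u) / h (exp u)"
    using F_eq[OF e] by simp
  with d2 show ?thesis unfolding G_def by simp
qed

lemma midpoint_ineq:
  assumes Fpos: "\<And>x. 0<x \<Longrightarrow> x<1 \<Longrightarrow> F x > 0"
    and r: "0 < r" "r < 1" and s: "0 < s" "s < 1"
  shows "ln (F (r * s)) = G ((1 - 1/2) *\<^sub>R ln (r^2) + (1/2) *\<^sub>R ln (s^2))"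
    "ln (r^2) \<in> {..<0}" "ln (s^2) \<in> {..<0}"
proof -
  have "(1 - 1/2) *\<^sub>R ln (r^2) + (1/2) *\<^sub>R ln (s^2) = ln (r * s)"
    using r s by (simp add: ln_mult ln_realpow)
  then show "ln (F (r * s)) = G ((1 - 1/2) *\<^sub>R ln (r^2) + (1/2) *\<^sub>R ln (s^2))"
    using r s by (simp add: G_def)
  show "ln (r^2) \<in> {..<0}" "ln (s^2) \<in> {..<0}" using r s
    by (auto simp: power_less_one_iff)
qed

lemma G_r2: "0 < r \<Longrightarrow> G (ln (r^2)) = ln (F (r^2))"
  by (simp add: G_def)

lemma convex_case:
  assumes Fpos: "\<And>x. 0<x \<Longrightarrow> x<1 \<Longrightarrow> F x > 0"
    and cv: "convex_on {..<0} G"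
    and r: "0 < r" "r < 1" and s: "0 < s" "s < 1"
  shows "F (r * s) \<le> sqrt (F (r^2) * F (s^2))"
proof -
  note m = midpoint_ineq[OF Fpos r s]
  have "G ((1 - 1/2) *\<^sub>R ln (r^2) + (1/2) *\<^sub>R ln (s^2)) \<le> (1 - 1/2) * G (ln (r^2)) + (1/2) * G (ln (s^2))"
    by (rule convex_onD[OF cv]) (use m in auto)
  then have "ln (F (r * s)) \<le> (1 - 1/2) * G (ln (r^2)) + (1/2) * G (ln (s^2))"
    using m(1) by simp
  also have "\<dots> = (ln (F (r^2)) + ln (F (s^2)))/2" using r s by (simp add: G_def)
  finally have "ln (F (r * s)) \<le> (ln (F (r^2)) + ln (F (s^2)))/2" .
  moreover have p: "F (r * s) > 0" "F (r^2) > 0" "F (s^2) > 0"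
  proof -
    have "r * s < 1" "0 < r * s" using mult_strict_mono[of r 1 s 1] r s by auto
    then show "F (r * s) > 0" by (rule Fpos[rotated])
    show "F (r^2) > 0" "F (s^2) > 0"
      using r s Fpos by (auto simp: power_less_one_iff)
  qed
  ultimately have "ln ((F (r * s))^2) \<le> ln (F (r^2) * F (s^2))"
    by (simp add: ln_mult ln_realpow)
  then have "(F (r * s))^2 \<le> F (r^2) * F (s^2)" using p by simp
  then show ?thesis by (rule real_le_rsqrt)
qed

lemma concave_case:
  assumes Fpos: "\<And>x. 0<x \<Longrightarrow> x<1 \<Longrightarrow> F x > 0"
    and cv: "convex_on {..<0} (\<lambda>u. - G u)"
    and r: "0 < r" "r < 1" and s: "0 < s" "s < 1"
  shows "sqrt (F (r^2) * F (s^2)) \<le> F (r * s)"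
proof -
  note m = midpoint_ineq[OF Fpos r s]
  have "(\<lambda>u. - G u) ((1 - 1/2) *\<^sub>R ln (r^2) + (1/2) *\<^sub>R ln (s^2)) \<le> (1 - 1/2) * (\<lambda>u. - G u) (ln (r^2)) + (1/2) * (\<lambda>u. - G u) (ln (s^2))"
    by (rule convex_onD[OF cv]) (use m in auto)
  then have "- ln (F (r * s)) \<le> (1 - 1/2) * (- G (ln (r^2))) + (1/2) * (- G (ln (s^2)))"
    using m(1) by simp
  also have "\<dots> = - (ln (F (r^2)) + ln (F (s^2)))/2" using r s by (simp add: G_def)
  finally have "ln (F (r * s)) \<ge> (ln (F (r^2)) + ln (F (s^2)))/2" by simp
  moreover have p: "F (r * s) > 0" "F (r^2) > 0" "F (s^2) > 0"
  proof -
    have "r * s < 1" "0 < r * s" using mult_strict_mono[of r 1 s 1] r s by auto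
    then show "F (r * s) > 0" by (rule Fpos[rotated])
    show "F (r^2) > 0" "F (s^2) > 0"
      using r s Fpos by (auto simp: power_less_one_iff)
  qed
  ultimately have "ln ((F (r * s))^2) \<ge> ln (F (r^2) * F (s^2))"
    by (simp add: ln_mult ln_realpow)
  then have "(F (r * s))^2 \<ge> F (r^2) * F (s^2)" using p by simp
  then show ?thesis using p by (metis abs_of_pos real_sqrt_abs real_sqrt_le_mono)
qed

end

locale pfunA = pfun +
  assumes ge1: "\<And>t. 0\<le>t \<Longrightarrow> t<1 \<Longrightarrow> f t \<ge> 1"
   and mono: "\<And>x y. 0\<le>x \<Longrightarrow> x\<le>y \<Longrightarrow> y<1 \<Longrightarrow> f x \<le> f y"
   and ratio: "\<And>x y t. 0<x \<Longrightarrow> x\<le>y \<Longrightarrow> y<1 \<Longrightarrow> 0\<le>t \<Longrightarrow> t\<le>1 \<Longrightarrow> f x * f (y*t) \<le> f y * f (x*t)"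
begin

lemma h_ge1: assumes "0\<le>x" "x<1" shows "h x \<ge> 1"
proof -
  have "integral {0..1} (\<lambda>_::real. 1::real) \<le> integral {0..1} (\<lambda>t. f (x*t))"
    by (rule integral_le) (use int_h[OF assms] mt[OF assms] ge1 in auto)
  then show ?thesis by (simp add: h_def)
qed

lemma h_mono: assumes "0\<le>x" "x\<le>y" "y<1" shows "h x \<le> h y"
  unfolding h_def
proof (rule integral_le)
  show "(\<lambda>t. f (x*t)) integrable_on {0..1}" "(\<lambda>t. f (y*t)) integrable_on {0..1}"
    using int_h assms by auto
  fix t :: real assume t: "t \<in> {0..1}"
  show "f (x*t) \<le> f (y*t)"
    using mono[of "x*t" "y*t"] mt[of y t] t assms mult_right_mono[of x y t] by auto
qed

lemma Fpos: "0<x \<Longrightarrow> x<1 \<Longrightarrow> F x > 0"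
  using F_eq h_ge1 by (simp add: order.strict_trans2)

lemma hf: assumes "0<x" "x\<le>y" "y<1" shows "f x * h y \<le> f y * h x"
proof -
  have "f x * h y = integral {0..1} (\<lambda>t. f x * f (y*t))"
    unfolding h_def using int_h assms by (intro integral_mult) auto
  also have "\<dots> \<le> integral {0..1} (\<lambda>t. f y * f (x*t))"
    by (rule integral_le) (use int_h assms ratio in \<open>auto intro!: int_hc\<close>)
  also have "\<dots> = f y * h x"
    unfolding h_def using int_h assms by (intro integral_mult[symmetric]) auto
  finally show ?thesis .
qed

lemma cvx: "convex_on {..<0} G"
proof (rule convex_on_realI[where f'="\<lambda>u. f (exp u) / h (exp u)"])
  show "connected {..<0::real}" by simp
  fix u assume "u \<in> {..<0::real}"
  then show "(G has_real_derivative f (exp u) / h (exp u)) (at u)"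
    using G_deriv[OF Fpos] by auto
next
  fix u v :: real assume uv: "u \<in> {..<0}" "v \<in> {..<0}" "u \<le> v"
  have e: "0 < exp u" "exp u \<le> exp v" "exp v < 1" using uv by auto
  have "f (exp u) * h (exp v) \<le> f (exp v) * h (exp u)" by (rule hf[OF e])
  moreover have "h (exp u) > 0" "h (exp v) > 0"
    using h_ge1[of "exp u"] h_ge1[of "exp v"] e by auto
  ultimately show "f (exp u) / h (exp u) \<le> f (exp v) / h (exp v)"
    by (simp add: divide_simps mult.commute)
qed

lemma sq: assumes "0<r" "r<1" shows "F (r^2) \<le> (F r)^2"
proof -
  have r2: "0 < r^2" "r^2 < 1" using assms by (auto simp: power_less_one_iff)
  have r3: "r^2 \<le> r" using assms mult_left_le[of r r] by (simp add: power2_eq_square)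
  note r2 = r2 r3
  have "F (r^2) = r^2 * h (r^2)" using F_eq r2 by simp
  also have "\<dots> \<le> r^2 * h r" using h_mono[of "r^2" r] r2 assms by simp
  also have "\<dots> \<le> r^2 * (h r)^2" using h_ge1[of r] assms by (simp add: power2_eq_square)
  also have "\<dots> = (F r)^2" using F_eq assms by (simp add: power_mult_distrib)
  finally show ?thesis .
qed

lemma mainA: assumes r: "0<r" "r<1" and s: "0<s" "s<1"
  shows "F (r * s) \<le> sqrt (F (r^2) * F (s^2)) \<and> sqrt (F (r^2) * F (s^2)) \<le> F r * F s"
proof
  show "F (r * s) \<le> sqrt (F (r^2) * F (s^2))" by (rule convex_case[OF Fpos cvx r s])
  have "F (r^2) * F (s^2) \<le> (F r)^2 * (F s)^2"
    by (rule mult_mono) (use sq r s Fpos[of "r^2"] Fpos[of "s^2"] in \<open>auto simp: power_less_one_iff\<close>)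
  then have "sqrt (F (r^2) * F (s^2)) \<le> sqrt ((F r * F s)^2)" by (simp add: power_mult_distrib)
  also have "\<dots> = F r * F s" using Fpos[of r] Fpos[of s] r s by simp
  finally show "sqrt (F (r^2) * F (s^2)) \<le> F r * F s" .
qed
end

locale pfunB = pfun +
  assumes le1: "\<And>t. 0\<le>t \<Longrightarrow> t<1 \<Longrightarrow> f t \<le> 1"
   and mono: "\<And>x y. 0\<le>x \<Longrightarrow> x\<le>y \<Longrightarrow> y<1 \<Longrightarrow> f y \<le> f x"
   and ratio: "\<And>x y t. 0<x \<Longrightarrow> x\<le>y \<Longrightarrow> y<1 \<Longrightarrow> 0\<le>t \<Longrightarrow> t\<le>1 \<Longrightarrow> f y * f (x*t) \<le> f x * f (y*t)"
begin

lemma h_le1: assumes "0\<le>x" "x<1" shows "h x \<le> 1"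
proof -
  have "integral {0..1} (\<lambda>t. f (x*t)) \<le> integral {0..1} (\<lambda>_::real. 1::real)"
    by (rule integral_le) (use int_h[OF assms] mt[OF assms] le1 in auto)
  then show ?thesis by (simp add: h_def)
qed

lemma h_ge: assumes "0\<le>x" "x<1" shows "h x \<ge> f x"
proof -
  have "integral {0..1} (\<lambda>_::real. f x) \<le> integral {0..1} (\<lambda>t. f (x*t))"
    by (rule integral_le) (use int_h[OF assms] mt[OF assms] mono assms mult_left_le[of _ x] in auto)
  then show ?thesis by (simp add: h_def)
qed

lemma h_pos: "0\<le>x \<Longrightarrow> x<1 \<Longrightarrow> h x > 0"
  using h_ge pos by (meson order.strict_trans2)

lemma h_anti: assumes "0\<le>x" "x\<le>y" "y<1" shows "h y \<le> h x"
  unfolding h_def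
proof (rule integral_le)
  show "(\<lambda>t. f (x*t)) integrable_on {0..1}" "(\<lambda>t. f (y*t)) integrable_on {0..1}"
    using int_h assms by auto
  fix t :: real assume t: "t \<in> {0..1}"
  show "f (y*t) \<le> f (x*t)"
    using mono[of "x*t" "y*t"] mt[of y t] t assms mult_right_mono[of x y t] by auto
qed

lemma Fpos: "0<x \<Longrightarrow> x<1 \<Longrightarrow> F x > 0"
  using F_eq h_pos by simp

lemma hf: assumes "0<x" "x\<le>y" "y<1" shows "f y * h x \<le> f x * h y"
proof -
  have "f y * h x = integral {0..1} (\<lambda>t. f y * f (x*t))"
    unfolding h_def using int_h assms by (intro integral_mult) auto
  also have "\<dots> \<le> integral {0..1} (\<lambda>t. f x * f (y*t))"
    by (rule integral_le) (use int_h assms ratio in \<open>auto intro!: int_hc\<close>)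
  also have "\<dots> = f x * h y"
    unfolding h_def using int_h assms by (intro integral_mult[symmetric]) auto
  finally show ?thesis .
qed

lemma cvx: "convex_on {..<0} (\<lambda>u. - G u)"
proof (rule convex_on_realI[where f'="\<lambda>u. - (f (exp u) / h (exp u))"])
  show "connected {..<0::real}" by simp
  fix u assume "u \<in> {..<0::real}"
  then show "((\<lambda>u. - G u) has_real_derivative - (f (exp u) / h (exp u))) (at u)"
    using G_deriv[OF Fpos] by (auto intro: DERIV_minus)
next
  fix u v :: real assume uv: "u \<in> {..<0}" "v \<in> {..<0}" "u \<le> v"
  have e: "0 < exp u" "exp u \<le> exp v" "exp v < 1" using uv by auto
  have "f (exp v) * h (exp u) \<le> f (exp u) * h (exp v)" by (rule hf[OF e])
  moreover have "h (exp u) > 0" "h (exp v) > 0" using h_pos e by auto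
  ultimately show "- (f (exp u) / h (exp u)) \<le> - (f (exp v) / h (exp v))"
    by (simp add: divide_simps mult.commute)
qed

lemma sq: assumes "0<r" "r<1" shows "(F r)^2 \<le> F (r^2)"
proof -
  have r2: "0 < r^2" "r^2 < 1" using assms by (auto simp: power_less_one_iff)
  have r3: "r^2 \<le> r" using assms mult_left_le[of r r] by (simp add: power2_eq_square)
  note r2 = r2 r3
  have "(F r)^2 = r^2 * (h r)^2" using F_eq assms by (simp add: power_mult_distrib)
  also have "\<dots> \<le> r^2 * h r" using h_le1[of r] h_pos[of r] assms
    by (simp add: power2_eq_square mult_left_le)
  also have "\<dots> \<le> r^2 * h (r^2)" using h_anti[of "r^2" r] r2 assms by simp
  also have "\<dots> = F (r^2)" using F_eq r2 by simp
  finally show ?thesis .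
qed

lemma mainB: assumes r: "0<r" "r<1" and s: "0<s" "s<1"
  shows "F r * F s \<le> sqrt (F (r^2) * F (s^2)) \<and> sqrt (F (r^2) * F (s^2)) \<le> F (r * s)"
proof
  show "sqrt (F (r^2) * F (s^2)) \<le> F (r * s)" by (rule concave_case[OF Fpos cvx r s])
  have "(F r)^2 * (F s)^2 \<le> F (r^2) * F (s^2)"
    by (rule mult_mono) (use sq r s Fpos[of "r^2"] Fpos[of "s^2"] in \<open>auto simp: power_less_one_iff\<close>)
  then have "sqrt ((F r * F s)^2) \<le> sqrt (F (r^2) * F (s^2))" by (simp add: power_mult_distrib)
  moreover have "sqrt ((F r * F s)^2) = F r * F s" using Fpos[of r] Fpos[of s] r s by simp
  ultimately show "F r * F s \<le> sqrt (F (r^2) * F (s^2))" by simp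
qed
end


lemma tp_facts: assumes "(p::real) > 0" "0 \<le> t" "t < 1" shows "0 \<le> t powr p" "t powr p < 1"
  using powr_less_mono2[of p t 1] assms by auto

lemma tp_le1: assumes "(p::real) > 0" "0 \<le> t" "t \<le> 1" shows "t powr p \<le> 1"
  using powr_le1[of p t] assms by auto

lemma cont_g: assumes p: "(p::real) > 0" and g: "continuous_on {0..<1} g"
  shows "continuous_on {0..<1} (\<lambda>t. g (t powr p))"
proof (rule continuous_on_compose2[OF g])
  show "continuous_on {0..<1::real} (\<lambda>t. t powr p)"
    by (rule continuous_on_powr') (use p in \<open>auto intro: continuous_intros\<close>)
  show "(\<lambda>t. t powr p) ` {0..<1} \<subseteq> {0..<1}" using tp_facts[OF p] by auto
qed

lemma ratio_g:
  assumes p: "(p::real) > 0" and r: "\<And>X Y T. 0\<le>X \<Longrightarrow> X\<le>Y \<Longrightarrow> Y<1 \<Longrightarrow> 0\<le>T \<Longrightarrow> T\<le>1 \<Longrightarrow> g X * g (Y*T) \<le> g Y * g (X*T)"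
    and xyt: "0<x" "x\<le>y" "y<1" "0\<le>t" "t\<le>1"
  shows "g (x powr p) * g ((y*t) powr p) \<le> g (y powr p) * g ((x*t) powr p)"
proof -
  have "(y*t) powr p = y powr p * t powr p" "(x*t) powr p = x powr p * t powr p"
    using xyt by (auto simp: powr_mult)
  moreover have "x powr p \<le> y powr p" using powr_mono2[of p x y] p xyt by auto
  ultimately show ?thesis using r[of "x powr p" "y powr p" "t powr p"] tp_facts[OF p, of y] tp_le1[OF p, of t] xyt by auto
qed

lemma ratio_gB:
  assumes p: "(p::real) > 0" and r: "\<And>X Y T. 0\<le>X \<Longrightarrow> X\<le>Y \<Longrightarrow> Y<1 \<Longrightarrow> 0\<le>T \<Longrightarrow> T\<le>1 \<Longrightarrow> g Y * g (X*T) \<le> g X * g (Y*T)"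
    and xyt: "0<x" "x\<le>y" "y<1" "0\<le>t" "t\<le>1"
  shows "g (y powr p) * g ((x*t) powr p) \<le> g (x powr p) * g ((y*t) powr p)"
proof -
  have "(y*t) powr p = y powr p * t powr p" "(x*t) powr p = x powr p * t powr p"
    using xyt by (auto simp: powr_mult)
  moreover have "x powr p \<le> y powr p" using powr_mono2[of p x y] p xyt by auto
  ultimately show ?thesis using r[of "x powr p" "y powr p" "t powr p"] tp_facts[OF p, of y] tp_le1[OF p, of t] xyt by auto
qed

lemma A_inst:
  assumes p: "(p::real) > 0" and g: "continuous_on {0..<1} g"
    and ge1: "\<And>X. 0\<le>X \<Longrightarrow> X<1 \<Longrightarrow> g X \<ge> 1"
    and mono: "\<And>X Y. 0\<le>X \<Longrightarrow> X\<le>Y \<Longrightarrow> Y<1 \<Longrightarrow> g X \<le> g Y"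
    and r: "\<And>X Y T. 0\<le>X \<Longrightarrow> X\<le>Y \<Longrightarrow> Y<1 \<Longrightarrow> 0\<le>T \<Longrightarrow> T\<le>1 \<Longrightarrow> g X * g (Y*T) \<le> g Y * g (X*T)"
  shows "pfunA (\<lambda>t. g (t powr p))"
proof unfold_locales
  show "continuous_on {0..<1} (\<lambda>t. g (t powr p))" by (rule cont_g[OF p g])
  fix t :: real assume "0 \<le> t" "t < 1"
  then show "0 < g (t powr p)" "1 \<le> g (t powr p)" using ge1 tp_facts[OF p] by (auto intro: less_le_trans[OF zero_less_one])
next
  fix x y :: real assume "0 \<le> x" "x \<le> y" "y < 1"
  then show "g (x powr p) \<le> g (y powr p)" using mono powr_mono2[of p x y] tp_facts[OF p] p by auto
next
  fix x y t :: real assume xyt: "0 < x" "x \<le> y" "y < 1" "0 \<le> t" "t \<le> 1"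
  show "g (x powr p) * g ((y*t) powr p) \<le> g (y powr p) * g ((x*t) powr p)"
    by (rule ratio_g[of p g x y t, OF p r xyt]) auto
qed

lemma B_inst:
  assumes p: "(p::real) > 0" and g: "continuous_on {0..<1} g"
    and pos: "\<And>X. 0\<le>X \<Longrightarrow> X<1 \<Longrightarrow> g X > 0"
    and le1: "\<And>X. 0\<le>X \<Longrightarrow> X<1 \<Longrightarrow> g X \<le> 1"
    and mono: "\<And>X Y. 0\<le>X \<Longrightarrow> X\<le>Y \<Longrightarrow> Y<1 \<Longrightarrow> g Y \<le> g X"
    and r: "\<And>X Y T. 0\<le>X \<Longrightarrow> X\<le>Y \<Longrightarrow> Y<1 \<Longrightarrow> 0\<le>T \<Longrightarrow> T\<le>1 \<Longrightarrow> g Y * g (X*T) \<le> g X * g (Y*T)"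
  shows "pfunB (\<lambda>t. g (t powr p))"
proof unfold_locales
  show "continuous_on {0..<1} (\<lambda>t. g (t powr p))" by (rule cont_g[OF p g])
  fix t :: real assume "0 \<le> t" "t < 1"
  then show "0 < g (t powr p)" "g (t powr p) \<le> 1" using pos le1 tp_facts[OF p] by auto
next
  fix x y :: real assume "0 \<le> x" "x \<le> y" "y < 1"
  then show "g (y powr p) \<le> g (x powr p)" using mono powr_mono2[of p x y] tp_facts[OF p] p by auto
next
  fix x y t :: real assume xyt: "0 < x" "x \<le> y" "y < 1" "0 \<le> t" "t \<le> 1"
  show "g (y powr p) * g ((x*t) powr p) \<le> g (x powr p) * g ((y*t) powr p)"
    by (rule ratio_gB[of p g x y t, OF p r xyt]) auto
qed


lemma poly1: "0\<le>X \<Longrightarrow> X\<le>Y \<Longrightarrow> 0\<le>T \<Longrightarrow> T\<le>1 \<Longrightarrow> (1-Y)*(1-X*T) \<le> (1-X)*(1-Y*T::real)"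
  using mult_nonneg_nonneg[of "Y-X" "1-T"] by (simp add: algebra_simps)

lemma poly2: "0\<le>X \<Longrightarrow> X\<le>Y \<Longrightarrow> 0\<le>T \<Longrightarrow> T\<le>1 \<Longrightarrow> (1+X)*(1+Y*T) \<le> (1+Y)*(1+X*T::real)"
  using mult_nonneg_nonneg[of "Y-X" "1-T"] by (simp add: algebra_simps)

lemma XT: "0\<le>X \<Longrightarrow> X<1 \<Longrightarrow> 0\<le>T \<Longrightarrow> T\<le>1 \<Longrightarrow> 0 \<le> X*T \<and> X*T < (1::real)"
  using mult_left_le[of T X] by auto

lemma arcsin_inst: assumes p: "p > 1" shows "pfunA (\<lambda>t. (1 - t powr p) powr (-1/p))"
proof -
  have pp: "(p::real) > 0" using p by simp
  have "pfunA (\<lambda>t. (\<lambda>X. (1 - X) powr (-1/p)) (t powr p))"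
  proof (rule A_inst[OF pp])
    show "continuous_on {0..<1} (\<lambda>X. (1 - X) powr (- 1 / p))"
      by (intro continuous_intros) auto
  next
    fix X :: real assume X: "0 \<le> X" "X < 1"
    have "(1-X) powr (1/p) \<le> 1" using powr_le1[of "1/p" "1-X"] X pp by auto
    moreover have "(1-X) powr (1/p) > 0" using X by simp
    ultimately show "1 \<le> (1 - X) powr (- 1 / p)"
      by (simp add: powr_minus_divide[of _ "1/p", simplified] divide_simps)
  next
    fix X Y :: real assume "0 \<le> X" "X \<le> Y" "Y < 1"
    then show "(1 - X) powr (- 1 / p) \<le> (1 - Y) powr (- 1 / p)"
      using powr_mono2'[of "-1/p" "1-Y" "1-X"] pp by auto
  next
    fix X Y T :: real assume h: "0 \<le> X" "X \<le> Y" "Y < 1" "0 \<le> T" "T \<le> 1"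
    have a: "0 \<le> X*T \<and> X*T < 1" "0 \<le> Y*T \<and> Y*T < 1" using XT h by auto
    have "(1 - X) powr (- 1 / p) * (1 - Y * T) powr (- 1 / p) = ((1 - X) * (1 - Y * T)) powr (- 1 / p)"
      using h a by (simp add: powr_mult)
    also have "\<dots> \<le> ((1 - Y) * (1 - X * T)) powr (- 1 / p)"
      using powr_mono2'[of "-1/p" "(1 - Y) * (1 - X * T)" "(1 - X) * (1 - Y * T)"] pp h a poly1[of X Y T] by auto
    also have "\<dots> = (1 - Y) powr (- 1 / p) * (1 - X * T) powr (- 1 / p)"
      using h a by (simp add: powr_mult)
    finally show "(1 - X) powr (- 1 / p) * (1 - Y * T) powr (- 1 / p) \<le> (1 - Y) powr (- 1 / p) * (1 - X * T) powr (- 1 / p)" .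
  qed
  then show ?thesis by simp
qed

lemma arsinh_inst: assumes p: "p > 1" shows "pfunB (\<lambda>t. (1 + t powr p) powr (-1/p))"
proof -
  have pp: "(p::real) > 0" using p by simp
  have "pfunB (\<lambda>t. (\<lambda>X. (1 + X) powr (-1/p)) (t powr p))"
  proof (rule B_inst[OF pp])
    show "continuous_on {0..<1} (\<lambda>X. (1 + X) powr (- 1 / p))"
      by (intro continuous_intros) auto
  next
    fix X :: real assume X: "0 \<le> X" "X < 1"
    then show "0 < (1 + X) powr (- 1 / p)" by simp
    have "(1+X) powr (1/p) \<ge> 1" using ge_one_powr_ge_zero[of "1+X" "1/p"] X pp by auto
    then show "(1 + X) powr (- 1 / p) \<le> 1"
      by (simp add: powr_minus_divide[of _ "1/p", simplified] divide_simps)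
  next
    fix X Y :: real assume "0 \<le> X" "X \<le> Y" "Y < 1"
    then show "(1 + Y) powr (- 1 / p) \<le> (1 + X) powr (- 1 / p)"
      using powr_mono2'[of "-1/p" "1+X" "1+Y"] pp by auto
  next
    fix X Y T :: real assume h: "0 \<le> X" "X \<le> Y" "Y < 1" "0 \<le> T" "T \<le> 1"
    have a: "0 \<le> X*T \<and> X*T < 1" "0 \<le> Y*T \<and> Y*T < 1" using XT h by auto
    have "(1 + Y) powr (- 1 / p) * (1 + X * T) powr (- 1 / p) = ((1 + Y) * (1 + X * T)) powr (- 1 / p)"
      using h a by (simp add: powr_mult)
    also have "\<dots> \<le> ((1 + X) * (1 + Y * T)) powr (- 1 / p)"
      using powr_mono2'[of "-1/p" "(1 + X) * (1 + Y * T)" "(1 + Y) * (1 + X * T)"] pp h a poly2[of X Y T] by auto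
    also have "\<dots> = (1 + X) powr (- 1 / p) * (1 + Y * T) powr (- 1 / p)"
      using h a by (simp add: powr_mult)
    finally show "(1 + Y) powr (- 1 / p) * (1 + X * T) powr (- 1 / p) \<le> (1 + X) powr (- 1 / p) * (1 + Y * T) powr (- 1 / p)" .
  qed
  then show ?thesis by simp
qed

lemma artanh_inst: assumes p: "p > 1" shows "pfunA (\<lambda>t. 1 / (1 - t powr p))"
proof -
  have pp: "(p::real) > 0" using p by simp
  have "pfunA (\<lambda>t. (\<lambda>X. 1 / (1 - X)) (t powr p))"
  proof (rule A_inst[OF pp])
    show "continuous_on {0..<1} (\<lambda>X::real. 1 / (1 - X))"
      by (intro continuous_intros) auto
  next
    fix X :: real assume X: "0 \<le> X" "X < 1"
    then show "1 \<le> 1 / (1 - X)" by (simp add: divide_simps)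
  next
    fix X Y :: real assume "0 \<le> X" "X \<le> Y" "Y < 1"
    then show "1 / (1 - X) \<le> 1 / (1 - Y)" by (simp add: divide_simps)
  next
    fix X Y T :: real assume h: "0 \<le> X" "X \<le> Y" "Y < 1" "0 \<le> T" "T \<le> 1"
    have a: "0 \<le> X*T \<and> X*T < 1" "0 \<le> Y*T \<and> Y*T < 1" using XT h by auto
    show "1 / (1 - X) * (1 / (1 - Y * T)) \<le> 1 / (1 - Y) * (1 / (1 - X * T))"
      using h a poly1[of X Y T] by (simp add: divide_simps mult_pos_pos)
  qed
  then show ?thesis by simp
qed

lemma arctan_inst: assumes p: "p > 1" shows "pfunB (\<lambda>t. 1 / (1 + t powr p))"
proof -
  have pp: "(p::real) > 0" using p by simp
  have "pfunB (\<lambda>t. (\<lambda>X. 1 / (1 + X)) (t powr p))"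
  proof (rule B_inst[OF pp])
    show "continuous_on {0..<1} (\<lambda>X::real. 1 / (1 + X))"
      by (intro continuous_intros) auto
  next
    fix X :: real assume X: "0 \<le> X" "X < 1"
    then show "0 < 1 / (1 + X)" "1 / (1 + X) \<le> 1" by (simp_all add: divide_simps)
  next
    fix X Y :: real assume "0 \<le> X" "X \<le> Y" "Y < 1"
    then show "1 / (1 + Y) \<le> 1 / (1 + X)" by (simp add: divide_simps)
  next
    fix X Y T :: real assume h: "0 \<le> X" "X \<le> Y" "Y < 1" "0 \<le> T" "T \<le> 1"
    have a: "0 \<le> X*T \<and> X*T < 1" "0 \<le> Y*T \<and> Y*T < 1" using XT h by auto
    show "1 / (1 + Y) * (1 / (1 + X * T)) \<le> 1 / (1 + X) * (1 / (1 + Y * T))"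
    proof -
      have q: "0 < 1 + Y * T" "0 < 1 + X * T" "0 < 1 + X" "0 < 1 + Y"
        using h mult_nonneg_nonneg[of X T] mult_nonneg_nonneg[of Y T] by linarith+
      have "1 / ((1 + Y) * (1 + X * T)) \<le> 1 / ((1 + X) * (1 + Y * T))"
        by (rule divide_left_mono) (use poly2[of X Y T] h q in auto)
      then show ?thesis by simp
    qed
  qed
  then show ?thesis by simp
qed



theorem theorem2p5:
  fixes p r s :: real
  assumes "p > 1" and "0 < r" and "r < 1" and "0 < s" and "s < 1"
  shows "(arcsin_p p (r * s) \<le> sqrt (arcsin_p p (r^2) * arcsin_p p (s^2))
         \<and> sqrt (arcsin_p p (r^2) * arcsin_p p (s^2)) \<le> arcsin_p p r * arcsin_p p s)
         \<and> (artanh_p p (r * s) \<le> sqrt (artanh_p p (r^2) * artanh_p p (s^2))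
         \<and> sqrt (artanh_p p (r^2) * artanh_p p (s^2)) \<le> artanh_p p r * artanh_p p s)
         \<and> (arsinh_p p r * arsinh_p p s \<le> sqrt (arsinh_p p (r^2) * arsinh_p p (s^2))
         \<and> sqrt (arsinh_p p (r^2) * arsinh_p p (s^2)) \<le> arsinh_p p (r * s))
         \<and> (arctan_p p r * arctan_p p s \<le> sqrt (arctan_p p (r^2) * arctan_p p (s^2))
         \<and> sqrt (arctan_p p (r^2) * arctan_p p (s^2)) \<le> arctan_p p (r * s))"
proof -
  have r: "0 < r" "r < 1" and s: "0 < s" "s < 1" and p: "p > 1" using assms by auto
  have A1: "arcsin_p p (r * s) \<le> sqrt (arcsin_p p (r^2) * arcsin_p p (s^2))
         \<and> sqrt (arcsin_p p (r^2) * arcsin_p p (s^2)) \<le> arcsin_p p r * arcsin_p p s"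
    using pfunA.mainA[OF arcsin_inst[OF p] r s] by (simp only: pfun.F_def[OF pfunA.axioms(1)[OF arcsin_inst[OF p]]] arcsin_p_def)
  have A2: "artanh_p p (r * s) \<le> sqrt (artanh_p p (r^2) * artanh_p p (s^2))
         \<and> sqrt (artanh_p p (r^2) * artanh_p p (s^2)) \<le> artanh_p p r * artanh_p p s"
    using pfunA.mainA[OF artanh_inst[OF p] r s] by (simp only: pfun.F_def[OF pfunA.axioms(1)[OF artanh_inst[OF p]]] artanh_p_def)
  have A3: "arsinh_p p r * arsinh_p p s \<le> sqrt (arsinh_p p (r^2) * arsinh_p p (s^2))
         \<and> sqrt (arsinh_p p (r^2) * arsinh_p p (s^2)) \<le> arsinh_p p (r * s)"
    using pfunB.mainB[OF arsinh_inst[OF p] r s] by (simp only: pfun.F_def[OF pfunB.axioms(1)[OF arsinh_inst[OF p]]] arsinh_p_def)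
  have A4: "arctan_p p r * arctan_p p s \<le> sqrt (arctan_p p (r^2) * arctan_p p (s^2))
         \<and> sqrt (arctan_p p (r^2) * arctan_p p (s^2)) \<le> arctan_p p (r * s)"
    using pfunB.mainB[OF arctan_inst[OF p] r s] by (simp only: pfun.F_def[OF pfunB.axioms(1)[OF arctan_inst[OF p]]] arctan_p_def)
  show ?thesis using A1 A2 A3 A4 by blast
qed

end
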